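(* Let $X$ be a finite group with $|X|=n$ and let $S\subseteq X$ be a generating set with $|S|=d$ and $S^{-1}=S$. Let $G$ be the Cayley graph $(X,S)$, and suppose $G$ is not bipartite. Then $$h_{out}(G)\leq 200\,\beta_{out}(G).$$
   Context: The Cayley graph $(X,S)$ has vertex set $X$ and edges $g\sim gs$ for all $g\in X$, $s\in S$. For a vertex set $A$, $\partial_{out}(A)$ is the set of vertices not in $A$ having a neighbor in $A$, and $I(A)$ is the number of vertices of $A$ having a neighbor in $A$. The vertex expansion is $h_{out}(G)=\min\{|\partial_{out}(A)|/|A| : A\subseteq X,\ 0<|A|\le n/2\}$. For disjoint $L,R\subseteq X$ with $L\cup R\ne\emptyset$, $b_{out}(L,R)=\dfrac{I(L)+I(R)+|\partial_{out}(L\cup R)|}{|L\cup R|}$, and $\beta_{out}(G)=\min_{L,R}b_{out}(L,R)$ over all such pairs. *)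

theory Defs
  imports "HOL-Algebra.Algebra"
begin

text \<open>Cayley graph (X,S) of a group G with X = carrier G: edges g ~ g s for s in S.
  Vertex v has a neighbour in A iff v s is in A for some s in S (S is symmetric).\<close>

definition has_nbr_in :: "('a, 'b) monoid_scheme \<Rightarrow> 'a set \<Rightarrow> 'a set \<Rightarrow> 'a \<Rightarrow> bool" where
  "has_nbr_in G S A v \<longleftrightarrow> (\<exists>s\<in>S. v \<otimes>\<^bsub>G\<^esub> s \<in> A)"

definition out_boundary :: "('a, 'b) monoid_scheme \<Rightarrow> 'a set \<Rightarrow> 'a set \<Rightarrow> 'a set" where
  "out_boundary G S A = {v \<in> carrier G. v \<notin> A \<and> has_nbr_in G S A v}"

definition inner_count :: "('a, 'b) monoid_scheme \<Rightarrow> 'a set \<Rightarrow> 'a set \<Rightarrow> nat" where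
  "inner_count G S A = card {v \<in> A. has_nbr_in G S A v}"

definition cayley_bipartite :: "('a, 'b) monoid_scheme \<Rightarrow> 'a set \<Rightarrow> bool" where
  "cayley_bipartite G S \<longleftrightarrow> (\<exists>L R. L \<union> R = carrier G \<and> L \<inter> R = {} \<and>
     (\<forall>g\<in>carrier G. \<forall>s\<in>S. \<not> (g \<in> L \<and> g \<otimes>\<^bsub>G\<^esub> s \<in> L) \<and> \<not> (g \<in> R \<and> g \<otimes>\<^bsub>G\<^esub> s \<in> R)))"

definition h_out :: "('a, 'b) monoid_scheme \<Rightarrow> 'a set \<Rightarrow> real" where
  "h_out G S = Min {real (card (out_boundary G S A)) / real (card A) | A.
      A \<subseteq> carrier G \<and> 0 < card A \<and> real (card A) \<le> real (card (carrier G)) / 2}"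

definition b_out :: "('a, 'b) monoid_scheme \<Rightarrow> 'a set \<Rightarrow> 'a set \<Rightarrow> 'a set \<Rightarrow> real" where
  "b_out G S L R = real (inner_count G S L + inner_count G S R + card (out_boundary G S (L \<union> R)))
      / real (card (L \<union> R))"

definition beta_out :: "('a, 'b) monoid_scheme \<Rightarrow> 'a set \<Rightarrow> real" where
  "beta_out G S = Min {b_out G S L R | L R.
      L \<subseteq> carrier G \<and> R \<subseteq> carrier G \<and> L \<inter> R = {} \<and> L \<union> R \<noteq> {}}"

end

theory Submission
  imports Defs
begin

locale cay = group G for G :: "('a,'b) monoid_scheme" (structure) +
  fixes S :: "'a set"
  assumes finX: "finite (carrier G)"
    and SX: "S \<subseteq> carrier G"
    and Sinv: "\<And>s. s \<in> S \<Longrightarrow> inv s \<in> S"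
begin

definition lt :: "'a \<Rightarrow> 'a set \<Rightarrow> 'a set" where "lt y A = (\<lambda>a. y \<otimes> a) ` A"

lemma lcancel: "y \<in> carrier G \<Longrightarrow> a \<in> carrier G \<Longrightarrow> b \<in> carrier G \<Longrightarrow> y \<otimes> a = y \<otimes> b \<Longrightarrow> a = b"
  by (metis l_inv l_one m_assoc inv_closed)

lemma lt_inj: "y \<in> carrier G \<Longrightarrow> inj_on (\<lambda>a. y \<otimes> a) (carrier G)"
  by (auto intro: inj_onI dest: lcancel)

lemma lt_card: "y \<in> carrier G \<Longrightarrow> A \<subseteq> carrier G \<Longrightarrow> card (lt y A) = card A"
  unfolding lt_def by (meson card_image inj_on_subset lt_inj)

lemma lt_sub: "y \<in> carrier G \<Longrightarrow> A \<subseteq> carrier G \<Longrightarrow> lt y A \<subseteq> carrier G"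
  unfolding lt_def by auto

lemma lt_Int: "y \<in> carrier G \<Longrightarrow> A \<subseteq> carrier G \<Longrightarrow> B \<subseteq> carrier G \<Longrightarrow> lt y (A \<inter> B) = lt y A \<inter> lt y B"
  unfolding lt_def using lcancel by (auto, blast)

lemma lt_Un: "lt y (A \<union> B) = lt y A \<union> lt y B"
  unfolding lt_def by auto

lemma lt_lt: "y \<in> carrier G \<Longrightarrow> z \<in> carrier G \<Longrightarrow> A \<subseteq> carrier G \<Longrightarrow> lt y (lt z A) = lt (y \<otimes> z) A"
  unfolding lt_def by (auto simp: m_assoc image_iff) (metis m_assoc subsetD)+

lemma lt_one: "A \<subseteq> carrier G \<Longrightarrow> lt \<one> A = A"
  unfolding lt_def by (auto simp: image_iff) (metis l_one subsetD)

lemma lt_mem: "g \<in> lt y A \<longleftrightarrow> (\<exists>a\<in>A. g = y \<otimes> a)"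
  unfolding lt_def by auto

lemma lt_disj: "y \<in> carrier G \<Longrightarrow> A \<subseteq> carrier G \<Longrightarrow> B \<subseteq> carrier G \<Longrightarrow> A \<inter> B = {} \<Longrightarrow> lt y A \<inter> lt y B = {}"
  using lt_Int[of y A B] by (simp add: lt_def)


definition nbp :: "'a set \<Rightarrow> 'a set \<Rightarrow> 'a set \<Rightarrow> bool" where
  "nbp L R D \<longleftrightarrow> (\<forall>v\<in>carrier G. \<forall>s\<in>S. (v \<otimes> s \<in> L \<longrightarrow> v \<in> R \<or> v \<in> D) \<and> (v \<otimes> s \<in> R \<longrightarrow> v \<in> L \<or> v \<in> D))"

lemma nbp_base:
  "nbp L R (out_boundary G S (L \<union> R) \<union> {v\<in>L. has_nbr_in G S L v} \<union> {v\<in>R. has_nbr_in G S R v})"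
  unfolding nbp_def out_boundary_def has_nbr_in_def by blast

lemma nbp_lt:
  assumes "nbp L R D" "y \<in> carrier G" "L \<subseteq> carrier G" "R \<subseteq> carrier G"
  shows "nbp (lt y L) (lt y R) (lt y D)"
  unfolding nbp_def
proof (intro ballI conjI impI)
  fix v s assume v: "v \<in> carrier G" and s: "s \<in> S"
  have sX: "s \<in> carrier G" using s SX by auto
  define w where "w = inv y \<otimes> v"
  have wX: "w \<in> carrier G" using v assms(2) w_def by auto
  have vw: "v = y \<otimes> w" using v assms(2) unfolding w_def by (simp add: m_assoc[symmetric])
  have ws: "w \<otimes> s = inv y \<otimes> (v \<otimes> s)" unfolding w_def using v sX assms(2) by (simp add: m_assoc)
  {
    assume "v \<otimes> s \<in> lt y L"
    then obtain l where l: "l \<in> L" "v \<otimes> s = y \<otimes> l" by (auto simp: lt_mem)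
    have "l \<in> carrier G" using l assms(3) by auto
    then have "w \<otimes> s = l" using ws l assms(2) by (simp add: m_assoc[symmetric])
    then have "w \<in> R \<or> w \<in> D" using assms(1) wX s l unfolding nbp_def by metis
    then show "v \<in> lt y R \<or> v \<in> lt y D" using vw by (auto simp: lt_mem)
  }
  {
    assume "v \<otimes> s \<in> lt y R"
    then obtain l where l: "l \<in> R" "v \<otimes> s = y \<otimes> l" by (auto simp: lt_mem)
    have "l \<in> carrier G" using l assms(4) by auto
    then have "w \<otimes> s = l" using ws l assms(2) by (simp add: m_assoc[symmetric])
    then have "w \<in> L \<or> w \<in> D" using assms(1) wX s l unfolding nbp_def by metis
    then show "v \<in> lt y L \<or> v \<in> lt y D" using vw by (auto simp: lt_mem)
  }
qed

lemma bd_C: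
  assumes "nbp L1 R1 D1" "nbp L2 R2 D2"
  shows "out_boundary G S ((L1 \<inter> L2) \<union> (R1 \<inter> R2)) \<subseteq> D1 \<union> D2"
  using assms unfolding nbp_def out_boundary_def has_nbr_in_def by blast

lemma bd_A:
  assumes "nbp L1 R1 D1" "nbp L2 R2 D2"
  shows "out_boundary G S ((L1 \<inter> R2) \<union> (R1 \<inter> L2)) \<subseteq> D1 \<union> D2"
  using assms unfolding nbp_def out_boundary_def has_nbr_in_def by blast

lemma dich:
  fixes h :: real
  assumes ex: "\<And>A. A \<subseteq> carrier G \<Longrightarrow> 0 < card A \<Longrightarrow> real (card A) \<le> real (card (carrier G)) / 2
       \<Longrightarrow> h * real (card A) \<le> real (card (out_boundary G S A))"
    and h0: "0 \<le> h" and Z: "Z \<subseteq> carrier G"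
  shows "h * real (card Z) \<le> real (card (out_boundary G S Z)) \<or>
     h * (real (card (carrier G)) - real (card Z) - real (card (out_boundary G S Z))) \<le> real (card (out_boundary G S Z))"
proof (cases "real (card Z) \<le> real (card (carrier G)) / 2")
  case True
  note T = True
  show ?thesis
  proof (cases "card Z = 0")
    case True then show ?thesis by simp
  next
    case False then show ?thesis using ex[OF Z] True by simp
  qed
next
  case False
  note ZF = False
  define B where "B = out_boundary G S Z"
  define W where "W = carrier G - Z - B"
  have BX: "B \<subseteq> carrier G - Z" unfolding B_def out_boundary_def by auto
  have fin: "finite Z" "finite B" "finite W" proof -
    show "finite Z" using finite_subset[OF Z finX] .
    show "finite B" using finX BX by (meson Diff_subset finite_subset subset_trans)
    show "finite W" using finX unfolding W_def by auto
  qed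
  have XU: "carrier G = W \<union> Z \<union> B" using BX Z unfolding W_def by auto
  have "card (carrier G) = card W + card Z + card B"
    unfolding XU using fin BX unfolding W_def
    by (subst card_Un_disjoint, auto, subst card_Un_disjoint, auto)
  then have cW: "real (card W) = real (card (carrier G)) - real (card Z) - real (card B)" by simp
  have bW: "out_boundary G S W \<subseteq> B"
  proof
    fix v assume "v \<in> out_boundary G S W"
    then obtain s where v: "v \<in> carrier G" "v \<notin> W" "s \<in> S" "v \<otimes> s \<in> W"
      unfolding out_boundary_def has_nbr_in_def by auto
    show "v \<in> B"
    proof (rule ccontr)
      assume "v \<notin> B"
      then have vZ: "v \<in> Z" using v unfolding W_def by auto
      have sX: "s \<in> carrier G" using v SX by auto
      have "(v \<otimes> s) \<otimes> inv s = v" using v sX by (simp add: m_assoc)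
      then have "v \<otimes> s \<in> B" using v vZ Sinv[OF v(3)] unfolding B_def out_boundary_def has_nbr_in_def W_def
        by (metis (no_types, lifting) DiffD1 DiffD2 mem_Collect_eq)
      then show False using v(4) unfolding W_def by auto
    qed
  qed
  have "h * real (card W) \<le> real (card B)"
  proof (cases "card W = 0")
    case True then show ?thesis by simp
  next
    case False
    have "real (card W) \<le> real (card (carrier G)) / 2" using cW False ZF by simp
    then have "h * real (card W) \<le> real (card (out_boundary G S W))"
      using ex[of W] False unfolding W_def by auto
    also have "\<dots> \<le> real (card B)" using card_mono[OF fin(2) bW] by simp
    finally show ?thesis .
  qed
  then show ?thesis using cW unfolding B_def by simp
qed

lemma card_filter_sum: "finite A \<Longrightarrow> card {x\<in>A. Q x} = (\<Sum>x\<in>A. if Q x then 1 else (0::nat))"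
proof -
  assume f: "finite A"
  have "card {x\<in>A. Q x} = (\<Sum>x\<in>{x\<in>A. Q x}. (1::nat))" by simp
  also have "\<dots> = (\<Sum>x\<in>A. if Q x then 1 else 0)" by (rule sum.inter_filter[OF f])
  finally show ?thesis .
qed

lemma double_count:
  assumes P: "P \<subseteq> carrier G"
  shows "(\<Sum>y\<in>carrier G. card (P \<inter> lt y P)) = card P * card P"
proof -
  have finP: "finite P" using finite_subset[OF P finX] .
  have eq1: "card (P \<inter> lt y P) = card {q\<in>P. y \<otimes> q \<in> P}" if y: "y \<in> carrier G" for y
  proof -
    have "P \<inter> lt y P = (\<lambda>q. y \<otimes> q) ` {q\<in>P. y \<otimes> q \<in> P}" unfolding lt_def by auto
    moreover have "inj_on (\<lambda>q. y \<otimes> q) {q\<in>P. y \<otimes> q \<in> P}"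
      by (rule inj_on_subset[OF lt_inj[OF y]]) (use P in auto)
    ultimately show ?thesis by (simp add: card_image)
  qed
  have "(\<Sum>y\<in>carrier G. card (P \<inter> lt y P)) = (\<Sum>y\<in>carrier G. card {q\<in>P. y \<otimes> q \<in> P})"
    by (rule sum.cong[OF refl]) (rule eq1)
  also have "\<dots> = (\<Sum>y\<in>carrier G. \<Sum>q\<in>P. if y \<otimes> q \<in> P then 1 else 0)"
    by (rule sum.cong[OF refl]) (rule card_filter_sum[OF finP])
  also have "\<dots> = (\<Sum>q\<in>P. \<Sum>y\<in>carrier G. if y \<otimes> q \<in> P then 1 else 0)" by (rule sum.swap)
  also have "\<dots> = (\<Sum>q\<in>P. card {y\<in>carrier G. y \<otimes> q \<in> P})"
    by (rule sum.cong[OF refl]) (rule card_filter_sum[OF finX, symmetric])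
  also have "\<dots> = (\<Sum>q\<in>P. card P)"
  proof (rule sum.cong[OF refl])
    fix q assume q: "q \<in> P"
    have qX: "q \<in> carrier G" using q P by auto
    have inj: "inj_on (\<lambda>y. y \<otimes> q) {y \<in> carrier G. y \<otimes> q \<in> P}"
      by (rule inj_onI) (use qX in auto)
    have im: "(\<lambda>y. y \<otimes> q) ` {y \<in> carrier G. y \<otimes> q \<in> P} = P"
    proof
      show "(\<lambda>y. y \<otimes> q) ` {y \<in> carrier G. y \<otimes> q \<in> P} \<subseteq> P" by auto
      show "P \<subseteq> (\<lambda>y. y \<otimes> q) ` {y \<in> carrier G. y \<otimes> q \<in> P}"
      proof
        fix p assume p: "p \<in> P"
        have pX: "p \<in> carrier G" using p P by auto
        have e: "(p \<otimes> inv q) \<otimes> q = p" using pX qX by (simp add: m_assoc)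
        have "p \<otimes> inv q \<in> {y \<in> carrier G. y \<otimes> q \<in> P}" using e p pX qX by simp
        then have "(\<lambda>y. y \<otimes> q) (p \<otimes> inv q) \<in> (\<lambda>y. y \<otimes> q) ` {y \<in> carrier G. y \<otimes> q \<in> P}" by (rule imageI)
        then show "p \<in> (\<lambda>y. y \<otimes> q) ` {y \<in> carrier G. y \<otimes> q \<in> P}" using e by simp
      qed
    qed
    show "card {y\<in>carrier G. y \<otimes> q \<in> P} = card P" using card_image[OF inj] im by simp
  qed
  also have "\<dots> = card P * card P" by simp
  finally show ?thesis .
qed

lemma h_facts:
  assumes n2: "card (carrier G) \<ge> 2"
  shows "\<And>A. A \<subseteq> carrier G \<Longrightarrow> 0 < card A \<Longrightarrow> real (card A) \<le> real (card (carrier G)) / 2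
       \<Longrightarrow> h_out G S * real (card A) \<le> real (card (out_boundary G S A))"
    and "h_out G S \<le> 2"
proof -
  define HS where "HS = {real (card (out_boundary G S A)) / real (card A) | A.
      A \<subseteq> carrier G \<and> 0 < card A \<and> real (card A) \<le> real (card (carrier G)) / 2}"
  have hdef: "h_out G S = Min HS" unfolding HS_def h_out_def by simp
  have "HS \<subseteq> (\<lambda>A. real (card (out_boundary G S A)) / real (card A)) ` Pow (carrier G)"
    unfolding HS_def by auto
  then have finH: "finite HS" using finX by (meson finite_Pow_iff finite_imageI rev_finite_subset)
  have le: "h_out G S \<le> real (card (out_boundary G S A)) / real (card A)"
    if "A \<subseteq> carrier G" "0 < card A" "real (card A) \<le> real (card (carrier G)) / 2" for A
    unfolding hdef by (rule Min_le[OF finH]) (use that in \<open>auto simp: HS_def\<close>)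
  show "h_out G S * real (card A) \<le> real (card (out_boundary G S A))"
    if "A \<subseteq> carrier G" "0 < card A" "real (card A) \<le> real (card (carrier G)) / 2" for A
    using le[OF that] that(2) by (simp add: pos_le_divide_eq)
  define k where "k = card (carrier G) div 2"
  have k1: "1 \<le> k" using n2 unfolding k_def by auto
  have k3: "card (carrier G) \<le> 3 * k" using n2 unfolding k_def by linarith
  obtain A where A: "A \<subseteq> carrier G" "card A = k"
    using obtain_subset_with_card_n[of k "carrier G"] unfolding k_def by auto
  have fA: "finite A" using finite_subset[OF A(1) finX] .
  have "out_boundary G S A \<subseteq> carrier G - A" unfolding out_boundary_def by auto
  then have "card (out_boundary G S A) \<le> card (carrier G - A)" using finX by (simp add: card_mono)
  also have "\<dots> = card (carrier G) - k" using A fA by (simp add: card_Diff_subset)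
  finally have "card (out_boundary G S A) \<le> card (carrier G) - k" .
  have bA: "real (card (out_boundary G S A)) \<le> real (card (carrier G)) - real k"
  proof -
    have "k \<le> card (carrier G)" using A finX card_mono by metis
    then show ?thesis using \<open>card (out_boundary G S A) \<le> card (carrier G) - k\<close> by (simp add: of_nat_diff)
  qed
  have "h_out G S \<le> real (card (out_boundary G S A)) / real (card A)"
    using le[of A] A k1 unfolding k_def by auto
  also have "\<dots> \<le> 2" using bA A k1 k3 by (simp add: divide_le_eq)
  finally show "h_out G S \<le> 2" .
qed

lemma beta_min:
  assumes "carrier G \<noteq> {}"
  obtains L R where "L \<subseteq> carrier G" "R \<subseteq> carrier G" "L \<inter> R = {}" "L \<union> R \<noteq> {}"
    "beta_out G S = b_out G S L R"
proof -
  define BS where "BS = {b_out G S L R | L R.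
      L \<subseteq> carrier G \<and> R \<subseteq> carrier G \<and> L \<inter> R = {} \<and> L \<union> R \<noteq> {}}"
  have "BS \<subseteq> (\<lambda>(L,R). b_out G S L R) ` (Pow (carrier G) \<times> Pow (carrier G))"
    unfolding BS_def by auto
  then have finB: "finite BS"
    by (rule finite_subset) (simp add: finX)
  have "b_out G S (carrier G) {} \<in> BS" unfolding BS_def using assms by auto
  then have "Min BS \<in> BS" using finB by (intro Min_in) auto
  then have "\<exists>L R. Min BS = b_out G S L R \<and> L \<subseteq> carrier G \<and> R \<subseteq> carrier G \<and> L \<inter> R = {} \<and> L \<union> R \<noteq> {}"
    unfolding BS_def mem_Collect_eq .
  moreover have "beta_out G S = Min BS" unfolding BS_def beta_out_def by simp
  ultimately show ?thesis using that by metis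
qed


lemma shift_count:
  assumes P: "P \<subseteq> carrier G" and s: "s \<in> carrier G"
  shows "card P \<le> card {g\<in>P. g \<otimes> s \<in> P} + (card (carrier G) - card P)"
proof -
  have finP: "finite P" using finite_subset[OF P finX] .
  have "P = {g\<in>P. g \<otimes> s \<in> P} \<union> {g\<in>P. g \<otimes> s \<notin> P}" by auto
  then have "card P \<le> card {g\<in>P. g \<otimes> s \<in> P} + card {g\<in>P. g \<otimes> s \<notin> P}"
    by (metis card_Un_le)
  moreover have "card {g\<in>P. g \<otimes> s \<notin> P} \<le> card (carrier G - P)"
  proof -
    have "inj_on (\<lambda>g. g \<otimes> s) {g\<in>P. g \<otimes> s \<notin> P}"
      by (rule inj_onI) (metis (no_types, lifting) P s right_cancel subsetD mem_Collect_eq)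
    moreover have "(\<lambda>g. g \<otimes> s) ` {g\<in>P. g \<otimes> s \<notin> P} \<subseteq> carrier G - P" using P s by auto
    ultimately show ?thesis using finX by (metis card_image card_mono finite_Diff)
  qed
  moreover have "card (carrier G - P) = card (carrier G) - card P" using P finP by (simp add: card_Diff_subset)
  ultimately show ?thesis by linarith
qed

lemma Int_card:
  assumes "P \<subseteq> carrier G" "Q \<subseteq> carrier G"
  shows "real (card P) + real (card Q) - real (card (carrier G)) \<le> real (card (P \<inter> Q))"
proof -
  have f: "finite P" "finite Q" using finite_subset[OF assms(1) finX] finite_subset[OF assms(2) finX] by auto
  have "card P + card Q = card (P \<union> Q) + card (P \<inter> Q)" using f by (rule card_Un_Int)
  moreover have "card (P \<union> Q) \<le> card (carrier G)" using assms finX by (simp add: card_mono)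
  ultimately show ?thesis by linarith
qed


lemma main:
  assumes n2: "card (carrier G) \<ge> 2" and nbip: "\<not> cayley_bipartite G S"
  shows "h_out G S \<le> 200 * beta_out G S"
proof (rule ccontr)
  assume contra: "\<not> ?thesis"
  define h where "h = h_out G S"
  define n where "n = real (card (carrier G))"
  have Xne: "carrier G \<noteq> {}" using n2 by auto
  have n0: "n > 0" using n2 unfolding n_def by simp
  obtain L R where LX: "L \<subseteq> carrier G" and RX: "R \<subseteq> carrier G" and LR: "L \<inter> R = {}"
     and LRne: "L \<union> R \<noteq> {}" and bq: "beta_out G S = b_out G S L R"
    using beta_min[OF Xne] by blast
  define U where "U = L \<union> R"
  have UX: "U \<subseteq> carrier G" using LX RX U_def by auto
  define IL where "IL = {v\<in>L. has_nbr_in G S L v}"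
  define IR where "IR = {v\<in>R. has_nbr_in G S R v}"
  define D0 where "D0 = out_boundary G S U \<union> IL \<union> IR"
  define e where "e = real (card IL + card IR + card (out_boundary G S U))"
  define m where "m = real (card U)"
  have finU: "finite U" using finite_subset[OF UX finX] .
  have m0: "m > 0" using finU LRne unfolding m_def U_def by (simp add: card_gt_0_iff)
  have mn: "m \<le> n" unfolding m_def n_def using UX finX card_mono by (simp add: card_mono)
  have beq: "beta_out G S = e / m"
    unfolding bq b_out_def e_def m_def U_def IL_def IR_def inner_count_def by simp
  have e0: "e \<ge> 0" unfolding e_def by simp
  have hm: "200 * e < h * m"
  proof -
    have "200 * (e / m) < h" using contra beq unfolding h_def by simp
    then have "200 * e / m < h" by simp
    then show ?thesis using m0 by (simp add: divide_less_eq mult.commute)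
  qed
  have hf: "\<And>A. A \<subseteq> carrier G \<Longrightarrow> 0 < card A \<Longrightarrow> real (card A) \<le> real (card (carrier G)) / 2
       \<Longrightarrow> h * real (card A) \<le> real (card (out_boundary G S A))" and h2: "h \<le> 2"
    using h_facts[OF n2] unfolding h_def by auto
  have "0 < h * m" using hm e0 by linarith
  then have h0: "h > 0" using m0 by (simp add: zero_less_mult_iff)
  have "h * m \<le> 2 * m" using h2 m0 by simp
  then have el: "e < n / 100" using hm mn by linarith
  have D0X: "D0 \<subseteq> carrier G" unfolding D0_def IL_def IR_def out_boundary_def using LX RX by auto
  have fD0: "finite D0" using finite_subset[OF D0X finX] .
  have cD0: "real (card D0) \<le> e"
  proof -
    have "card D0 \<le> card (out_boundary G S U \<union> IL) + card IR" unfolding D0_def by (rule card_Un_le)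
    also have "\<dots> \<le> card (out_boundary G S U) + card IL + card IR" using card_Un_le by simp
    finally show ?thesis unfolding e_def by simp
  qed
  have nbp0: "nbp L R D0" using nbp_base[of L R] unfolding D0_def IL_def IR_def U_def .
  have dch: "real (card Z) < m / 100 \<or> real (card Z) > 97 * n / 100"
    if Z: "Z \<subseteq> carrier G" and ZD: "out_boundary G S Z \<subseteq> D" and fD: "finite D" and cD: "real (card D) \<le> 2 * e" for Z D
  proof -
    have b: "real (card (out_boundary G S Z)) \<le> 2 * e" using card_mono[OF fD ZD] cD by linarith
    have "2 * e < h * (m / 100)" using hm by simp
    from dich[OF hf _ Z] h0
    have "h * real (card Z) \<le> real (card (out_boundary G S Z)) \<or>
     h * (n - real (card Z) - real (card (out_boundary G S Z))) \<le> real (card (out_boundary G S Z))"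
      unfolding n_def by auto
    then show ?thesis
    proof
      assume "h * real (card Z) \<le> real (card (out_boundary G S Z))"
      then have "h * real (card Z) < h * (m / 100)" using b \<open>2 * e < h * (m / 100)\<close> by linarith
      then show ?thesis using h0 by (simp add: mult_less_cancel_left_pos)
    next
      assume a: "h * (n - real (card Z) - real (card (out_boundary G S Z))) \<le> real (card (out_boundary G S Z))"
      then have "h * (n - real (card Z) - real (card (out_boundary G S Z))) < h * (m / 100)"
        using b \<open>2 * e < h * (m / 100)\<close> by linarith
      then have "n - real (card Z) - real (card (out_boundary G S Z)) < m / 100"
        using h0 by (simp add: mult_less_cancel_left_pos)
      then show ?thesis using b el mn by linarith
    qed
  qed
  have mbig: "m > 97 * n / 100"
  proof -
    have "out_boundary G S U \<subseteq> D0" unfolding D0_def by auto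
    from dch[OF UX this fD0] cD0 e0 have "m < m / 100 \<or> m > 97 * n / 100" unfolding m_def by linarith
    then show ?thesis using m0 by linarith
  qed
  define C where "C = (\<lambda>y. (L \<inter> lt y L) \<union> (R \<inter> lt y R))"
  define A where "A = (\<lambda>y. (L \<inter> lt y R) \<union> (R \<inter> lt y L))"
  have CX: "C y \<subseteq> carrier G" for y unfolding C_def using LX RX by auto
  have AX: "A y \<subseteq> carrier G" for y unfolding A_def using LX RX by auto
  have bdD: "finite (D0 \<union> lt y D0) \<and> real (card (D0 \<union> lt y D0)) \<le> 2 * e" if y: "y \<in> carrier G" for y
  proof
    show "finite (D0 \<union> lt y D0)" using fD0 unfolding lt_def by auto
    have "card (D0 \<union> lt y D0) \<le> card D0 + card (lt y D0)" by (rule card_Un_le)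
    also have "\<dots> = 2 * card D0" using lt_card[OF y D0X] by simp
    finally show "real (card (D0 \<union> lt y D0)) \<le> 2 * e" using cD0 by linarith
  qed
  have nbpy: "nbp (lt y L) (lt y R) (lt y D0)" if "y \<in> carrier G" for y
    using nbp_lt[OF nbp0 that LX RX] .
  have dC: "real (card (C y)) < m / 100 \<or> real (card (C y)) > 97 * n / 100" if y: "y \<in> carrier G" for y
  proof -
    have "out_boundary G S (C y) \<subseteq> D0 \<union> lt y D0" using bd_C[OF nbp0 nbpy[OF y]] unfolding C_def .
    then show ?thesis using dch[OF CX[of y]] bdD[OF y] by blast
  qed
  have dA: "real (card (A y)) < m / 100 \<or> real (card (A y)) > 97 * n / 100" if y: "y \<in> carrier G" for y
  proof -
    have "out_boundary G S (A y) \<subseteq> D0 \<union> lt y D0" using bd_A[OF nbp0 nbpy[OF y]] unfolding A_def .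
    then show ?thesis using dch[OF AX[of y]] bdD[OF y] by blast
  qed
  have bigC: "real (card (C y)) > 97 * n / 100" if y: "y \<in> carrier G" and "real (card (C y)) > 94 * n / 100" for y
    using dC[OF y] that mn n0 by linarith
  have bigA: "real (card (A y)) > 97 * n / 100" if y: "y \<in> carrier G" and "real (card (A y)) > 94 * n / 100" for y
    using dA[OF y] that mn n0 by linarith
  have CAsum: "real (card (C y)) + real (card (A y)) > 94 * n / 100 \<and> real (card (C y)) + real (card (A y)) \<le> n"
    if y: "y \<in> carrier G" for y
  proof -
    have disj: "lt y L \<inter> lt y R = {}" using lt_disj[OF y LX RX LR] .
    have d: "C y \<inter> A y = {}" unfolding C_def A_def using disj LR by blast
    have u: "C y \<union> A y = U \<inter> lt y U" unfolding C_def A_def U_def lt_Un by blast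
    have fC: "finite (C y)" using finite_subset[OF CX finX] .
    have fA: "finite (A y)" using finite_subset[OF AX finX] .
    have eq: "card (C y) + card (A y) = card (U \<inter> lt y U)"
      using card_Un_disjoint[OF fC fA d] u by simp
    have r2: "real (card U) + real (card (lt y U)) - n \<le> real (card (U \<inter> lt y U))"
      using Int_card[OF UX lt_sub[OF y UX]] unfolding n_def .
    have r3: "card (lt y U) = card U" using lt_card[OF y UX] .
    have "U \<inter> lt y U \<subseteq> carrier G" using UX by blast
    then have "card (U \<inter> lt y U) \<le> card (carrier G)" using finX by (rule card_mono[rotated])
    then have r4: "real (card (U \<inter> lt y U)) \<le> n" unfolding n_def by simp
    have r1: "real (card (C y)) + real (card (A y)) = real (card (U \<inter> lt y U))"
      using eq by (metis of_nat_add)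
    have r5: "real (card U) = m" unfolding m_def ..
    have r6: "real (card (lt y U)) = m" using r3 r5 by simp
    show ?thesis using r1 r2 r6 r4 r5 mbig by linarith
  qed
  define Ev where "Ev = {y\<in>carrier G. real (card (C y)) > 97 * n / 100}"
  define Od where "Od = {y\<in>carrier G. real (card (A y)) > 97 * n / 100}"
  have EO: "(y \<in> Ev \<or> y \<in> Od) \<and> \<not> (y \<in> Ev \<and> y \<in> Od)" if y: "y \<in> carrier G" for y
  proof -
    have "y \<in> Ev \<longleftrightarrow> real (card (C y)) > 97 * n / 100" "y \<in> Od \<longleftrightarrow> real (card (A y)) > 97 * n / 100"
      unfolding Ev_def Od_def using y by auto
    then show ?thesis using CAsum[OF y] dC[OF y] dA[OF y] mn n0 by linarith
  qed
  have EX: "Ev \<subseteq> carrier G" and OX: "Od \<subseteq> carrier G" unfolding Ev_def Od_def by auto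
  have inter: "real (card (P \<inter> lt y1 Q)) > 94 * n / 100"
    if y1: "y1 \<in> carrier G" and P: "P \<subseteq> carrier G" and Q: "Q \<subseteq> carrier G"
      and cP: "real (card P) > 97 * n / 100" and cQ: "real (card Q) > 97 * n / 100" for y1 P Q
    using Int_card[OF P lt_sub[OF y1 Q]] lt_card[OF y1 Q] cP cQ unfolding n_def by linarith
  have ltC: "lt y1 (C y2) = (lt y1 L \<inter> lt (y1 \<otimes> y2) L) \<union> (lt y1 R \<inter> lt (y1 \<otimes> y2) R)"
    if "y1 \<in> carrier G" "y2 \<in> carrier G" for y1 y2
    unfolding C_def lt_Un using that LX RX
    by (simp add: lt_Int lt_sub lt_lt)
  have ltA: "lt y1 (A y2) = (lt y1 L \<inter> lt (y1 \<otimes> y2) R) \<union> (lt y1 R \<inter> lt (y1 \<otimes> y2) L)"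
    if "y1 \<in> carrier G" "y2 \<in> carrier G" for y1 y2
    unfolding A_def lt_Un using that LX RX
    by (simp add: lt_Int lt_sub lt_lt)
  have fin: "finite (C y)" "finite (A y)" for y using finite_subset[OF CX finX] finite_subset[OF AX finX] by auto
  have clEE: "y1 \<otimes> y2 \<in> Ev" if "y1 \<in> Ev" "y2 \<in> Ev" for y1 y2
  proof -
    have y: "y1 \<in> carrier G" "y2 \<in> carrier G" using that EX by auto
    have disj: "lt y1 L \<inter> lt y1 R = {}" using lt_disj[OF y(1) LX RX LR] .
    have "C y1 \<inter> lt y1 (C y2) \<subseteq> C (y1 \<otimes> y2)" unfolding ltC[OF y] using disj by (auto simp: C_def)
    then have "card (C y1 \<inter> lt y1 (C y2)) \<le> card (C (y1 \<otimes> y2))" using fin card_mono by blast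
    moreover have "real (card (C y1 \<inter> lt y1 (C y2))) > 94 * n / 100"
      using inter[OF y(1) CX CX] that unfolding Ev_def by auto
    ultimately show ?thesis using bigC[of "y1 \<otimes> y2"] y unfolding Ev_def by auto
  qed
  have clEO: "y1 \<otimes> y2 \<in> Od" if "y1 \<in> Ev" "y2 \<in> Od" for y1 y2
  proof -
    have y: "y1 \<in> carrier G" "y2 \<in> carrier G" using that EX OX by auto
    have disj: "lt y1 L \<inter> lt y1 R = {}" using lt_disj[OF y(1) LX RX LR] .
    have "C y1 \<inter> lt y1 (A y2) \<subseteq> A (y1 \<otimes> y2)" unfolding ltA[OF y] using disj by (auto simp: C_def A_def)
    then have "card (C y1 \<inter> lt y1 (A y2)) \<le> card (A (y1 \<otimes> y2))" using fin card_mono by blast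
    moreover have "real (card (C y1 \<inter> lt y1 (A y2))) > 94 * n / 100"
      using inter[OF y(1) CX AX] that unfolding Ev_def Od_def by auto
    ultimately show ?thesis using bigA[of "y1 \<otimes> y2"] y unfolding Od_def by auto
  qed
  have clOE: "y1 \<otimes> y2 \<in> Od" if "y1 \<in> Od" "y2 \<in> Ev" for y1 y2
  proof -
    have y: "y1 \<in> carrier G" "y2 \<in> carrier G" using that EX OX by auto
    have disj: "lt y1 L \<inter> lt y1 R = {}" using lt_disj[OF y(1) LX RX LR] .
    have "A y1 \<inter> lt y1 (C y2) \<subseteq> A (y1 \<otimes> y2)" unfolding ltC[OF y] using disj by (auto simp: C_def A_def)
    then have "card (A y1 \<inter> lt y1 (C y2)) \<le> card (A (y1 \<otimes> y2))" using fin card_mono by blast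
    moreover have "real (card (A y1 \<inter> lt y1 (C y2))) > 94 * n / 100"
      using inter[OF y(1) AX CX] that unfolding Ev_def Od_def by auto
    ultimately show ?thesis using bigA[of "y1 \<otimes> y2"] y unfolding Od_def by auto
  qed
  have clOO: "y1 \<otimes> y2 \<in> Ev" if "y1 \<in> Od" "y2 \<in> Od" for y1 y2
  proof -
    have y: "y1 \<in> carrier G" "y2 \<in> carrier G" using that EX OX by auto
    have disj: "lt y1 L \<inter> lt y1 R = {}" using lt_disj[OF y(1) LX RX LR] .
    have "A y1 \<inter> lt y1 (A y2) \<subseteq> C (y1 \<otimes> y2)" unfolding ltA[OF y] using disj by (auto simp: C_def A_def)
    then have "card (A y1 \<inter> lt y1 (A y2)) \<le> card (C (y1 \<otimes> y2))" using fin card_mono by blast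
    moreover have "real (card (A y1 \<inter> lt y1 (A y2))) > 94 * n / 100"
      using inter[OF y(1) AX AX] that unfolding Ev_def Od_def by auto
    ultimately show ?thesis using bigC[of "y1 \<otimes> y2"] y unfolding Ev_def by auto
  qed
  have iffE: "y \<otimes> l \<in> Ev \<longleftrightarrow> l \<in> Ev" "y \<otimes> l \<in> Od \<longleftrightarrow> l \<in> Od"
    if "y \<in> Ev" "l \<in> carrier G" for y l
  proof -
    have yX: "y \<in> carrier G" using that EX by auto
    have "y \<otimes> l \<in> carrier G" using yX that by simp
    note a = EO[OF that(2)] EO[OF this]
    have b: "l \<in> Ev \<Longrightarrow> y \<otimes> l \<in> Ev" "l \<in> Od \<Longrightarrow> y \<otimes> l \<in> Od"
      using clEE[OF that(1), of l] clEO[OF that(1), of l] by auto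
    show "y \<otimes> l \<in> Ev \<longleftrightarrow> l \<in> Ev" "y \<otimes> l \<in> Od \<longleftrightarrow> l \<in> Od"
      using a b by blast+
  qed
  have iffO: "y \<otimes> l \<in> Ev \<longleftrightarrow> l \<in> Od" "y \<otimes> l \<in> Od \<longleftrightarrow> l \<in> Ev"
    if "y \<in> Od" "l \<in> carrier G" for y l
  proof -
    have yX: "y \<in> carrier G" using that OX by auto
    have "y \<otimes> l \<in> carrier G" using yX that by simp
    note a = EO[OF that(2)] EO[OF this]
    have b: "l \<in> Ev \<Longrightarrow> y \<otimes> l \<in> Od" "l \<in> Od \<Longrightarrow> y \<otimes> l \<in> Ev"
      using clOE[OF that(1), of l] clOO[OF that(1), of l] by auto
    show "y \<otimes> l \<in> Ev \<longleftrightarrow> l \<in> Od" "y \<otimes> l \<in> Od \<longleftrightarrow> l \<in> Ev"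
      using a b by blast+
  qed
  define P where "P = (L \<inter> Ev) \<union> (R \<inter> Od)"
  define M where "M = (L \<inter> Od) \<union> (R \<inter> Ev)"
  have PX: "P \<subseteq> carrier G" and MX: "M \<subseteq> carrier G" unfolding P_def M_def using LX RX by auto
  have finP: "finite P" and finM: "finite M" using finite_subset[OF PX finX] finite_subset[OF MX finX] by auto
  have EOd: "Ev \<inter> Od = {}"
  proof (rule equals0I)
    fix x assume "x \<in> Ev \<inter> Od"
    then have "x \<in> carrier G" "x \<in> Ev" "x \<in> Od" using EX by auto
    then show False using EO[of x] by blast
  qed
  have mP: "x \<in> P \<longleftrightarrow> (x \<in> L \<and> x \<in> Ev) \<or> (x \<in> R \<and> x \<in> Od)" for x unfolding P_def by blast
  have mM: "x \<in> M \<longleftrightarrow> (x \<in> L \<and> x \<in> Od) \<or> (x \<in> R \<and> x \<in> Ev)" for x unfolding M_def by blast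
  have PM: "P \<inter> M = {}" unfolding P_def M_def using LR EOd by blast
  have covers: "real (card (P \<inter> lt y P)) + real (card (M \<inter> lt y M)) > 97 * n / 100"
    if y: "y \<in> carrier G" for y
  proof -
    have f1: "finite (P \<inter> lt y P)" "finite (M \<inter> lt y M)" using finP finM by auto
    have "\<exists>Z. Z \<subseteq> (P \<inter> lt y P) \<union> (M \<inter> lt y M) \<and> real (card Z) > 97 * n / 100"
    proof (cases "y \<in> Ev")
      case True
      have "C y \<subseteq> (P \<inter> lt y P) \<union> (M \<inter> lt y M)"
      proof
        fix g assume g: "g \<in> C y"
        then obtain l where l: "g = y \<otimes> l" "(g \<in> L \<and> l \<in> L) \<or> (g \<in> R \<and> l \<in> R)"
          unfolding C_def by (auto simp: lt_mem)
        have lX: "l \<in> carrier G" using l LX RX by blast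
        note i = iffE[OF True lX, folded l(1)]
        have lt1: "l \<in> P \<Longrightarrow> g \<in> lt y P" "l \<in> M \<Longrightarrow> g \<in> lt y M" using l(1) by (auto simp: lt_mem)
        show "g \<in> (P \<inter> lt y P) \<union> (M \<inter> lt y M)"
          using l(2) i EO[OF lX] lt1 mP[of g] mP[of l] mM[of g] mM[of l] by blast
      qed
      then show ?thesis using True unfolding Ev_def by blast
    next
      case False
      then have yO: "y \<in> Od" using EO[OF y] by blast
      have "A y \<subseteq> (P \<inter> lt y P) \<union> (M \<inter> lt y M)"
      proof
        fix g assume g: "g \<in> A y"
        then obtain l where l: "g = y \<otimes> l" "(g \<in> L \<and> l \<in> R) \<or> (g \<in> R \<and> l \<in> L)"
          unfolding A_def by (auto simp: lt_mem)
        have lX: "l \<in> carrier G" using l LX RX by blast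
        note i = iffO[OF yO lX, folded l(1)]
        have lt1: "l \<in> P \<Longrightarrow> g \<in> lt y P" "l \<in> M \<Longrightarrow> g \<in> lt y M" using l(1) by (auto simp: lt_mem)
        show "g \<in> (P \<inter> lt y P) \<union> (M \<inter> lt y M)"
          using l(2) i EO[OF lX] lt1 mP[of g] mP[of l] mM[of g] mM[of l] by blast
      qed
      then show ?thesis using yO unfolding Od_def by blast
    qed
    then obtain Z where Z: "Z \<subseteq> (P \<inter> lt y P) \<union> (M \<inter> lt y M)" "real (card Z) > 97 * n / 100" by blast
    have "card Z \<le> card ((P \<inter> lt y P) \<union> (M \<inter> lt y M))" using Z(1) f1 by (simp add: card_mono)
    also have "\<dots> \<le> card (P \<inter> lt y P) + card (M \<inter> lt y M)" by (rule card_Un_le)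
    finally have "card Z \<le> card (P \<inter> lt y P) + card (M \<inter> lt y M)" .
    then have "real (card Z) \<le> real (card (P \<inter> lt y P)) + real (card (M \<inter> lt y M))"
      by (metis of_nat_add of_nat_le_iff)
    then show ?thesis using Z(2) by linarith
  qed
  have sumeq: "(\<Sum>y\<in>carrier G. real (card (P \<inter> lt y P)) + real (card (M \<inter> lt y M)))
      = real (card P) * real (card P) + real (card M) * real (card M)"
  proof -
    have "(\<Sum>y\<in>carrier G. real (card (P \<inter> lt y P)) + real (card (M \<inter> lt y M)))
       = real (\<Sum>y\<in>carrier G. card (P \<inter> lt y P)) + real (\<Sum>y\<in>carrier G. card (M \<inter> lt y M))"
      by (simp add: sum.distrib)
    also have "\<dots> = real (card P * card P) + real (card M * card M)"
      using double_count[OF PX] double_count[OF MX] by simp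
    finally show ?thesis by simp
  qed
  have sumge: "n * (97 * n / 100) \<le> real (card P) * real (card P) + real (card M) * real (card M)"
  proof -
    have "(\<Sum>y\<in>carrier G. 97 * n / 100) \<le> (\<Sum>y\<in>carrier G. real (card (P \<inter> lt y P)) + real (card (M \<inter> lt y M)))"
      by (rule sum_mono) (use covers in \<open>auto intro: less_imp_le\<close>)
    then show ?thesis using sumeq unfolding n_def by simp
  qed
  have IX: "finite (IL \<union> IR)" "real (card (IL \<union> IR)) \<le> e"
  proof -
    have "IL \<union> IR \<subseteq> carrier G" unfolding IL_def IR_def using LX RX by auto
    then show "finite (IL \<union> IR)" using finite_subset finX by blast
    have "card (IL \<union> IR) \<le> card IL + card IR" by (rule card_Un_le)
    then show "real (card (IL \<union> IR)) \<le> e" unfolding e_def by simp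
  qed
  have SO: "s \<in> Od" if s: "s \<in> S" for s
  proof (rule ccontr)
    assume "s \<notin> Od"
    have sX: "s \<in> carrier G" using s SX by auto
    then have sE: "s \<in> Ev" using EO[OF sX] \<open>s \<notin> Od\<close> by blast
    have gs: "g \<otimes> s \<in> carrier G" if "g \<in> carrier G" for g using that sX by simp
    have sub1: "{g\<in>P. g \<otimes> s \<in> P} \<subseteq> IL \<union> IR"
    proof
      fix g assume g: "g \<in> {g\<in>P. g \<otimes> s \<in> P}"
      then have gX: "g \<in> carrier G" using PX by auto
      have c1: "g \<in> Ev \<Longrightarrow> g \<otimes> s \<in> Ev" using clEE[OF _ sE, of g] by auto
      have c2: "g \<in> Od \<Longrightarrow> g \<otimes> s \<in> Od" using clOE[OF _ sE, of g] by auto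
      have "g \<otimes> s \<in> Ev \<longleftrightarrow> \<not> g \<otimes> s \<in> Od" using EO[OF gs[OF gX]] by blast
      then show "g \<in> IL \<union> IR" using g c1 c2 s unfolding P_def IL_def IR_def has_nbr_in_def by blast
    qed
    have sub2: "{g\<in>M. g \<otimes> s \<in> M} \<subseteq> IL \<union> IR"
    proof
      fix g assume g: "g \<in> {g\<in>M. g \<otimes> s \<in> M}"
      then have gX: "g \<in> carrier G" using MX by auto
      have c1: "g \<in> Ev \<Longrightarrow> g \<otimes> s \<in> Ev" using clEE[OF _ sE, of g] by auto
      have c2: "g \<in> Od \<Longrightarrow> g \<otimes> s \<in> Od" using clOE[OF _ sE, of g] by auto
      have "g \<otimes> s \<in> Ev \<longleftrightarrow> \<not> g \<otimes> s \<in> Od" using EO[OF gs[OF gX]] by blast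
      then show "g \<in> IL \<union> IR" using g c1 c2 s unfolding M_def IL_def IR_def has_nbr_in_def by blast
    qed
    have "card {g\<in>P. g \<otimes> s \<in> P} \<le> card (IL \<union> IR)" using sub1 IX(1) by (rule card_mono[rotated])
    moreover have "card P \<le> card {g\<in>P. g \<otimes> s \<in> P} + (card (carrier G) - card P)"
      by (rule shift_count[OF PX sX])
    moreover have "card P \<le> card (carrier G)" using PX finX by (rule card_mono[rotated])
    ultimately have bP: "2 * real (card P) \<le> n + e" using IX(2) unfolding n_def by linarith
    have "card {g\<in>M. g \<otimes> s \<in> M} \<le> card (IL \<union> IR)" using sub2 IX(1) by (rule card_mono[rotated])
    moreover have "card M \<le> card {g\<in>M. g \<otimes> s \<in> M} + (card (carrier G) - card M)"
      by (rule shift_count[OF MX sX])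
    moreover have "card M \<le> card (carrier G)" using MX finX by (rule card_mono[rotated])
    ultimately have bM: "2 * real (card M) \<le> n + e" using IX(2) unfolding n_def by linarith
    have "card (P \<union> M) = card P + card M" using card_Un_disjoint[OF finP finM PM] .
    moreover have "card (P \<union> M) \<le> card (carrier G)" using PX MX finX by (intro card_mono) auto
    ultimately have PMn: "real (card P) + real (card M) \<le> n" unfolding n_def by linarith
    have "real (card P) * real (card P) \<le> real (card P) * ((n + e) / 2)"
      using bP by (intro mult_left_mono) auto
    moreover have "real (card M) * real (card M) \<le> real (card M) * ((n + e) / 2)"
      using bM by (intro mult_left_mono) auto
    moreover have "(real (card P) + real (card M)) * ((n + e) / 2) \<le> n * ((n + e) / 2)"
      using PMn e0 n0 by (intro mult_right_mono) auto
    ultimately have "n * (97 * n / 100) \<le> n * ((n + e) / 2)"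
      using sumge by (simp add: algebra_simps)
    then have "97 * n / 100 \<le> (n + e) / 2" using n0 by (simp add: mult_le_cancel_left_pos)
    then show False using el n0 by (simp add: field_simps)
  qed
  have "cayley_bipartite G S"
    unfolding cayley_bipartite_def
  proof (intro exI conjI ballI)
    show "Ev \<union> Od = carrier G"
    proof
      show "Ev \<union> Od \<subseteq> carrier G" using EX OX by blast
      show "carrier G \<subseteq> Ev \<union> Od"
      proof
        fix x assume "x \<in> carrier G"
        then show "x \<in> Ev \<union> Od" using EO[of x] by blast
      qed
    qed
    show "Ev \<inter> Od = {}" by (rule EOd)
    fix g s assume g: "g \<in> carrier G" and s: "s \<in> S"
    have sO: "s \<in> Od" using SO[OF s] .
    have sX: "s \<in> carrier G" using s SX by auto
    have "g \<otimes> s \<in> carrier G" using g sX by simp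
    note a = EO[OF this] EO[OF g]
    have b: "g \<in> Ev \<Longrightarrow> g \<otimes> s \<in> Od" "g \<in> Od \<Longrightarrow> g \<otimes> s \<in> Ev"
      using clEO[OF _ sO, of g] clOO[OF _ sO, of g] by auto
    show "\<not> (g \<in> Ev \<and> g \<otimes> s \<in> Ev)" "\<not> (g \<in> Od \<and> g \<otimes> s \<in> Od)"
      using a b by blast+
  qed
  then show False using nbip by contradiction
qed

end

theorem theorem3:
  fixes G :: "('a, 'b) monoid_scheme" and S :: "'a set"
  assumes "group G"
    and "finite (carrier G)"
    and "card (carrier G) \<ge> 2"
    and "S \<subseteq> carrier G"
    and "generate G S = carrier G"
    and "(\<lambda>s. inv\<^bsub>G\<^esub> s) ` S = S"
    and "\<not> cayley_bipartite G S"
  shows "h_out G S \<le> 200 * beta_out G S"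
proof -
  have "cay G S"
    unfolding cay_def cay_axioms_def
  proof (intro conjI allI impI)
    show "group G" by (rule assms(1))
    show "finite (carrier G)" by (rule assms(2))
    show "S \<subseteq> carrier G" by (rule assms(4))
    fix s assume "s \<in> S"
    then show "inv\<^bsub>G\<^esub> s \<in> S" using assms(6) by blast
  qed
  then show ?thesis using cay.main assms(3) assms(7) by blast
qed

end
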